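(* Let $f\in\mathcal{L}^1(\mathbb{R})+BV_0(\mathbb{R})$ be such that $t\mapsto t f(t)$ also belongs to $\mathcal{L}^1(\mathbb{R})+BV_0(\mathbb{R})$. Then the $HK$-Sine Fourier transform $\mathcal{F}^S_{HK}(f)$ belongs to $ACG^*_{loc}(\mathbb{R})$.
   Context: $BV_0(\mathbb{R})$: real functions of bounded variation on $\mathbb{R}$ vanishing at $\pm\infty$; $\mathcal{L}^1(\mathbb{R})+BV_0(\mathbb{R})$ consists of sums $f_1+f_2$, $f_1\in\mathcal{L}^1$, $f_2\in BV_0$ (real-valued). $\mathcal{F}^S_{HK}(f)(s)=\frac{1}{\sqrt{2\pi}}\int_{\mathbb{R}}\sin(sx)f(x)\,dx$ (Henstock–Kurzweil integral over $\mathbb{R}$), and $\mathcal{F}^C_{HK}(f)(s)=\frac{1}{\sqrt{2\pi}}\int_{\mathbb{R}}\cos(sx)f(x)\,dx$, so that $\mathcal{F}_{HK}(f)=\mathcal{F}^C_{HK}(f)-i\mathcal{F}^S_{HK}(f)$. A function $F$ is $AC^*$ on a set $E\subset[a,b]$ if for every $\epsilon>0$ there is $\eta>0$ such that for every finite family of nonoverlapping intervals $[c_k,d_k]$ with endpoints in $E$ and $\sum(d_k-c_k)<\eta$, one has $\sum_k\omega(F,[c_k,d_k])<\epsilon$, where $\omega$ denotes oscillation; $F$ is $ACG^*$ on $[a,b]$ if $F$ is continuous on $[a,b]$ and $[a,b]$ is a countable union of sets on each of which $F$ is $AC^*$. $ACG^*_{loc}(\mathbb{R})$: functions that are $ACG^*$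 on every compact interval. *)

theory Defs
  imports "HOL-Analysis.Analysis"
begin

definition bounded_variation_real :: "(real \<Rightarrow> real) \<Rightarrow> bool" where
  "bounded_variation_real f \<longleftrightarrow>
     (\<exists>M. \<forall>(n::nat) (x::nat \<Rightarrow> real). (\<forall>i<n. x i \<le> x (Suc i)) \<longrightarrow>
        (\<Sum>i<n. \<bar>f (x (Suc i)) - f (x i)\<bar>) \<le> M)"

definition BV0 :: "(real \<Rightarrow> real) \<Rightarrow> bool" where
  "BV0 f \<longleftrightarrow> bounded_variation_real f \<and> (f \<longlongrightarrow> 0) at_top \<and> (f \<longlongrightarrow> 0) at_bot"

definition L1_plus_BV0 :: "(real \<Rightarrow> real) \<Rightarrow> bool" where
  "L1_plus_BV0 f \<longleftrightarrow>
     (\<exists>f1 f2. integrable lebesgue f1 \<and> BV0 f2 \<and> f = (\<lambda>x. f1 x + f2 x))"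

text \<open>HK sine Fourier transform (Henstock--Kurzweil integral over R).\<close>
definition FS_HK :: "(real \<Rightarrow> real) \<Rightarrow> real \<Rightarrow> real" where
  "FS_HK f s = (1 / sqrt (2 * pi)) * integral UNIV (\<lambda>x. sin (s * x) * f x)"

definition osc :: "(real \<Rightarrow> real) \<Rightarrow> real \<Rightarrow> real \<Rightarrow> real" where
  "osc F c d = (SUP p\<in>{c..d} \<times> {c..d}. \<bar>F (fst p) - F (snd p)\<bar>)"

definition AC_star_on :: "(real \<Rightarrow> real) \<Rightarrow> real set \<Rightarrow> bool" where
  "AC_star_on F E \<longleftrightarrow>
     (\<forall>\<epsilon>>0. \<exists>\<eta>>0. \<forall>D::(real \<times> real) set.
        finite D \<and> (\<forall>(c,d)\<in>D. c \<le> d \<and> c \<in> E \<and> d \<in> E) \<and>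
        (\<forall>(c,d)\<in>D. \<forall>(c',d')\<in>D. (c,d) \<noteq> (c',d') \<longrightarrow> {c<..<d} \<inter> {c'<..<d'} = {}) \<and>
        (\<Sum>(c,d)\<in>D. d - c) < \<eta>
        \<longrightarrow> (\<Sum>(c,d)\<in>D. osc F c d) < \<epsilon>)"

definition ACG_star_on :: "(real \<Rightarrow> real) \<Rightarrow> real \<Rightarrow> real \<Rightarrow> bool" where
  "ACG_star_on F a b \<longleftrightarrow>
     continuous_on {a..b} F \<and>
     (\<exists>E::nat \<Rightarrow> real set. (\<Union>n. E n) = {a..b} \<and> (\<forall>n. AC_star_on F (E n)))"

definition ACG_star_loc :: "(real \<Rightarrow> real) \<Rightarrow> bool" where
  "ACG_star_loc F \<longleftrightarrow> (\<forall>a b. a \<le> b \<longrightarrow> ACG_star_on F a b)"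

end

theory Submission imports Defs begin

lemma BV_decomp:
  assumes "bounded_variation_real f"
  obtains P Q M where "mono P" "mono Q" "\<And>x. f x = P x - Q x"
    "\<And>x. \<bar>P x\<bar> \<le> M" "\<And>x. \<bar>Q x\<bar> \<le> M"
proof -
  obtain Mv where Mv: "\<And>n (y::nat\<Rightarrow>real). (\<forall>i<n. y i \<le> y (Suc i)) \<Longrightarrow>
      (\<Sum>i<n. \<bar>f (y (Suc i)) - f (y i)\<bar>) \<le> Mv"
    using assms unfolding bounded_variation_real_def by blast
  define S where "S x = {(\<Sum>i<n. \<bar>f (y (Suc i)) - f (y i)\<bar>) | n y.
        (\<forall>i<n. y i \<le> y (Suc i)) \<and> y n \<le> x}" for x
  define V where "V x = Sup (S x)" for x
  have ne: "0 \<in> S x" for x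
    unfolding S_def by (rule CollectI, rule exI[of _ 0], rule exI[of _ "\<lambda>_. x"]) auto
  have bdd: "bdd_above (S x)" for x
    unfolding S_def bdd_above_def using Mv by blast
  have V0: "0 \<le> V x" for x
    unfolding V_def using ne bdd by (meson cSup_upper)
  have VM: "V x \<le> Mv" for x
    unfolding V_def using ne by (intro cSup_least) (auto simp: S_def intro: Mv)
  have Vmono: "mono V"
  proof (rule monoI)
    fix x x' :: real assume "x \<le> x'"
    then have "S x \<subseteq> S x'" unfolding S_def by (auto intro: order_trans)
    then show "V x \<le> V x'" unfolding V_def using ne bdd[of x'] by (intro cSup_subset_mono) auto
  qed
  have ext: "\<sigma> + (f x' - f x) \<le> V x'" if sx: "\<sigma> \<in> S x" and xx: "x \<le> x'" for \<sigma> x x'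
  proof -
    obtain n y where sig: "\<sigma> = (\<Sum>i<n. \<bar>f (y (Suc i)) - f (y i)\<bar>)"
      and y: "\<forall>i<n. y i \<le> y (Suc i)" "y n \<le> x"
      using sx unfolding S_def by blast
    define y' where "y' i = (if i \<le> n then y i else if i = Suc n then x else x')" for i
    have y'm: "\<forall>i<Suc (Suc n). y' i \<le> y' (Suc i)"
      using y xx by (auto simp: y'_def less_Suc_eq)
    have y'n: "y' (Suc (Suc n)) \<le> x'" by (simp add: y'_def)
    have "(\<Sum>i<Suc (Suc n). \<bar>f (y' (Suc i)) - f (y' i)\<bar>) =
          (\<Sum>i<n. \<bar>f (y' (Suc i)) - f (y' i)\<bar>) + \<bar>f x - f (y n)\<bar> + \<bar>f x' - f x\<bar>"
      by (simp add: y'_def)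
    also have "(\<Sum>i<n. \<bar>f (y' (Suc i)) - f (y' i)\<bar>) = \<sigma>"
      unfolding sig by (intro sum.cong) (auto simp: y'_def)
    finally have eq: "(\<Sum>i<Suc (Suc n). \<bar>f (y' (Suc i)) - f (y' i)\<bar>) =
        \<sigma> + \<bar>f x - f (y n)\<bar> + \<bar>f x' - f x\<bar>" .
    have "(\<Sum>i<Suc (Suc n). \<bar>f (y' (Suc i)) - f (y' i)\<bar>) \<in> S x'"
      unfolding S_def using y'm y'n by blast
    then have "(\<Sum>i<Suc (Suc n). \<bar>f (y' (Suc i)) - f (y' i)\<bar>) \<le> V x'"
      unfolding V_def using bdd by (meson cSup_upper)
    then show ?thesis using eq by linarith
  qed
  have Qmono: "mono (\<lambda>x. V x - f x)"
  proof (rule monoI)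
    fix x x' :: real assume xx: "x \<le> x'"
    have "V x \<le> V x' - (f x' - f x)"
      unfolding V_def[of x] using ne by (intro cSup_least) (auto dest: ext[OF _ xx])
    then show "V x - f x \<le> V x' - f x'" by linarith
  qed
  have fb: "\<bar>f x\<bar> \<le> \<bar>f 0\<bar> + Mv" for x
  proof -
    define y where "y i = (if i = 0 then min 0 x else max 0 x)" for i :: nat
    have "(\<Sum>i<Suc 0. \<bar>f (y (Suc i)) - f (y i)\<bar>) \<le> Mv"
      by (rule Mv) (auto simp: y_def)
    then have "\<bar>f (max 0 x) - f (min 0 x)\<bar> \<le> Mv" by (simp add: y_def)
    then show ?thesis by (cases "0 \<le> x") (auto simp: max_def min_def)
  qed
  show ?thesis
  proof (rule that[of V "\<lambda>x. V x - f x" "2*Mv + \<bar>f 0\<bar>"])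
    show "\<bar>V x\<bar> \<le> 2 * Mv + \<bar>f 0\<bar>" for x using V0[of x] VM[of x] by auto
    show "\<bar>V x - f x\<bar> \<le> 2 * Mv + \<bar>f 0\<bar>" for x using V0[of x] VM[of x] fb[of x] by auto
  qed (use Vmono Qmono in auto)
qed

lemma smvt_bound:
  fixes g \<phi> :: "real \<Rightarrow> real"
  assumes phi: "\<phi> integrable_on {u..v}" and uv: "u \<le> v"
    and g: "\<And>x y. u \<le> x \<Longrightarrow> x \<le> y \<Longrightarrow> y \<le> v \<Longrightarrow> g x \<le> g y"
    and K: "\<And>\<alpha> \<beta>. u \<le> \<alpha> \<Longrightarrow> \<alpha> \<le> \<beta> \<Longrightarrow> \<beta> \<le> v \<Longrightarrow> \<bar>integral {\<alpha>..\<beta>} \<phi>\<bar> \<le> K"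
  shows "(\<lambda>x. g x * \<phi> x) integrable_on {u..v}"
    "\<bar>integral {u..v} (\<lambda>x. g x * \<phi> x)\<bar> \<le> (\<bar>g u\<bar> + \<bar>g v\<bar>) * K"
proof -
  have "\<exists>c. c \<in> {u..v} \<and> ((\<lambda>x. g x * \<phi> x) has_integral (g u * integral {u..c} \<phi> + g v * integral {c..v} \<phi>)) {u..v}"
    by (rule second_mean_value_theorem_full[where g=g, OF phi uv]) (auto intro: g)
  then obtain c where c: "c \<in> {u..v}"
    and hi: "((\<lambda>x. g x * \<phi> x) has_integral (g u * integral {u..c} \<phi> + g v * integral {c..v} \<phi>)) {u..v}"
    by blast
  then show "(\<lambda>x. g x * \<phi> x) integrable_on {u..v}" by blast
  have "\<bar>g u * integral {u..c} \<phi> + g v * integral {c..v} \<phi>\<bar> \<le> \<bar>g u\<bar> * K + \<bar>g v\<bar> * K"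
  proof -
    have 1: "\<bar>integral {u..c} \<phi>\<bar> \<le> K" using c by (intro K) auto
    have 2: "\<bar>integral {c..v} \<phi>\<bar> \<le> K" using c by (intro K) auto
    have "\<bar>g u * integral {u..c} \<phi>\<bar> \<le> \<bar>g u\<bar> * K"
      using 1 by (simp add: abs_mult mult_left_mono)
    moreover have "\<bar>g v * integral {c..v} \<phi>\<bar> \<le> \<bar>g v\<bar> * K"
      using 2 by (simp add: abs_mult mult_left_mono)
    ultimately show ?thesis by linarith
  qed
  then show "\<bar>integral {u..v} (\<lambda>x. g x * \<phi> x)\<bar> \<le> (\<bar>g u\<bar> + \<bar>g v\<bar>) * K"
    using integral_unique[OF hi] by (simp add: algebra_simps)
qed

lemma smvt_bound2:
  fixes P Q \<phi> :: "real \<Rightarrow> real"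
  assumes "mono P" "mono Q" "\<And>x. \<bar>P x\<bar> \<le> M" "\<And>x. \<bar>Q x\<bar> \<le> M"
    and phi: "\<phi> integrable_on {u..v}" and uv: "u \<le> v"
    and K: "\<And>\<alpha> \<beta>. u \<le> \<alpha> \<Longrightarrow> \<alpha> \<le> \<beta> \<Longrightarrow> \<beta> \<le> v \<Longrightarrow> \<bar>integral {\<alpha>..\<beta>} \<phi>\<bar> \<le> K"
  shows "(\<lambda>x. (P x - Q x) * \<phi> x) integrable_on {u..v}"
    "\<bar>integral {u..v} (\<lambda>x. (P x - Q x) * \<phi> x)\<bar> \<le> 4 * M * K"
proof -
  have gP: "P x \<le> P y" "Q x \<le> Q y" if "x \<le> y" for x y using assms(1,2) that by (auto dest: monoD)
  have iP: "(\<lambda>x. P x * \<phi> x) integrable_on {u..v}"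
    "\<bar>integral {u..v} (\<lambda>x. P x * \<phi> x)\<bar> \<le> (\<bar>P u\<bar> + \<bar>P v\<bar>) * K"
    subgoal by (rule smvt_bound(1)[OF phi uv]) (auto intro: gP K)
    subgoal by (rule smvt_bound(2)[OF phi uv]) (auto intro: gP K)
    done
  have iQ: "(\<lambda>x. Q x * \<phi> x) integrable_on {u..v}"
    "\<bar>integral {u..v} (\<lambda>x. Q x * \<phi> x)\<bar> \<le> (\<bar>Q u\<bar> + \<bar>Q v\<bar>) * K"
    subgoal by (rule smvt_bound(1)[OF phi uv]) (auto intro: gP K)
    subgoal by (rule smvt_bound(2)[OF phi uv]) (auto intro: gP K)
    done
  have eq: "(\<lambda>x. (P x - Q x) * \<phi> x) = (\<lambda>x. P x * \<phi> x - Q x * \<phi> x)"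
    by (simp add: algebra_simps)
  show "(\<lambda>x. (P x - Q x) * \<phi> x) integrable_on {u..v}"
    unfolding eq using iP(1) iQ(1) by (rule integrable_diff)
  have K0: "0 \<le> K" using K[of u u] uv by fastforce
  have "(\<bar>P u\<bar> + \<bar>P v\<bar>) * K \<le> (2*M) * K" using assms(3)[of u] assms(3)[of v] K0
    by (intro mult_right_mono) auto
  moreover have "(\<bar>Q u\<bar> + \<bar>Q v\<bar>) * K \<le> (2*M) * K" using assms(4)[of u] assms(4)[of v] K0
    by (intro mult_right_mono) auto
  ultimately show "\<bar>integral {u..v} (\<lambda>x. (P x - Q x) * \<phi> x)\<bar> \<le> 4 * M * K"
    unfolding eq integral_diff[OF iP(1) iQ(1)] using iP(2) iQ(2) by linarith
qed

lemma has_integral_sin_lin: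
  fixes s :: real
  assumes "s \<noteq> 0" "p \<le> q"
  shows "((\<lambda>x. sin (s*x)) has_integral (cos (s*p) - cos (s*q)) / s) {p..q}"
proof -
  have "((\<lambda>x. sin (s*x)) has_integral ((- cos (s*q) / s) - (- cos (s*p) / s))) {p..q}"
  proof (rule fundamental_theorem_of_calculus[OF assms(2)])
    fix x assume "x \<in> {p..q}"
    have "((\<lambda>x. - cos (s*x) / s) has_real_derivative (sin (s*x) * s / s)) (at x)"
      by (auto intro!: derivative_eq_intros)
    then show "((\<lambda>x. - cos (s*x) / s) has_vector_derivative sin (s*x)) (at x within {p..q})"
      using assms(1) by (simp add: has_real_derivative_iff_has_vector_derivative has_vector_derivative_at_within)
  qed
  then show ?thesis by (simp add: diff_divide_distrib)
qed

lemma int_sin_bound: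
  fixes s :: real
  assumes "s \<noteq> 0" "p \<le> q"
  shows "\<bar>integral {p..q} (\<lambda>x. sin (s*x))\<bar> \<le> 2 / \<bar>s\<bar>"
proof -
  have "\<bar>cos (s*p) - cos (s*q)\<bar> \<le> 2"
    using abs_cos_le_one[of "s*p"] abs_cos_le_one[of "s*q"] by linarith
  then show ?thesis using integral_unique[OF has_integral_sin_lin[OF assms]] assms(1)
    by (simp add: abs_divide divide_right_mono)
qed

lemma sinx_bound:
  fixes s :: real
  assumes s: "s \<noteq> 0" and a: "0 < \<alpha>" "\<alpha> \<le> \<beta>"
  shows "(\<lambda>x. sin (s*x) / x) integrable_on {\<alpha>..\<beta>}"
    "\<bar>integral {\<alpha>..\<beta>} (\<lambda>x. sin (s*x) / x)\<bar> \<le> 4 / (\<bar>s\<bar> * \<alpha>)"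
proof -
  show int: "(\<lambda>x. sin (s*x) / x) integrable_on {\<alpha>..\<beta>}"
    using a by (intro integrable_continuous_interval continuous_intros) auto
  have phi: "(\<lambda>x. sin (s*x)) integrable_on {\<alpha>..\<beta>}"
    by (intro integrable_continuous_interval continuous_intros)
  have g: "- 1 / x \<le> - 1 / y" if "\<alpha> \<le> x" "x \<le> y" "y \<le> \<beta>" for x y
    using that a by (simp add: frac_le)
  have B: "(\<lambda>x. (- 1 / x) * sin (s*x)) integrable_on {\<alpha>..\<beta>}"
    "\<bar>integral {\<alpha>..\<beta>} (\<lambda>x. (- 1 / x) * sin (s*x))\<bar> \<le> (\<bar>- 1 / \<alpha>\<bar> + \<bar>- 1 / \<beta>\<bar>) * (2 / \<bar>s\<bar>)"
    subgoal by (rule smvt_bound(1)[OF phi a(2), where K="2 / \<bar>s\<bar>"]) (use g a in \<open>auto simp: frac_le intro: int_sin_bound[OF s]\<close>)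
    subgoal by (rule smvt_bound(2)[OF phi a(2), where g="\<lambda>x. - 1 / x" and K="2 / \<bar>s\<bar>"]) (use g a in \<open>auto simp: frac_le intro: int_sin_bound[OF s]\<close>)
    done
  have eq: "(\<lambda>x. sin (s*x) / x) = (\<lambda>x. - ((- 1 / x) * sin (s*x)))" by auto
  have "\<bar>integral {\<alpha>..\<beta>} (\<lambda>x. sin (s*x) / x)\<bar> = \<bar>integral {\<alpha>..\<beta>} (\<lambda>x. (- 1 / x) * sin (s*x))\<bar>"
    unfolding eq integral_neg by simp
  also have "\<dots> \<le> (\<bar>- 1 / \<alpha>\<bar> + \<bar>- 1 / \<beta>\<bar>) * (2 / \<bar>s\<bar>)" using B(2) by simp
  also have "\<dots> \<le> (2 / \<alpha>) * (2 / \<bar>s\<bar>)"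
  proof (intro mult_right_mono)
    have "1 / \<beta> \<le> 1 / \<alpha>" using a by (simp add: frac_le)
    then show "\<bar>- 1 / \<alpha>\<bar> + \<bar>- 1 / \<beta>\<bar> \<le> 2 / \<alpha>" using a by simp
  qed simp
  also have "\<dots> = 4 / (\<bar>s\<bar> * \<alpha>)" by simp
  finally show "\<bar>integral {\<alpha>..\<beta>} (\<lambda>x. sin (s*x) / x)\<bar> \<le> 4 / (\<bar>s\<bar> * \<alpha>)" .
qed

lemma has_integral_cos_lin:
  fixes s :: real
  assumes "s \<noteq> 0" "p \<le> q"
  shows "((\<lambda>x. cos (s*x)) has_integral (sin (s*q) - sin (s*p)) / s) {p..q}"
proof -
  have "((\<lambda>x. cos (s*x)) has_integral ((sin (s*q) / s) - (sin (s*p) / s))) {p..q}"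
  proof (rule fundamental_theorem_of_calculus[OF assms(2)])
    fix x assume "x \<in> {p..q}"
    have "((\<lambda>x. sin (s*x) / s) has_real_derivative (cos (s*x) * s / s)) (at x)"
      by (auto intro!: derivative_eq_intros)
    then show "((\<lambda>x. sin (s*x) / s) has_vector_derivative cos (s*x)) (at x within {p..q})"
      using assms(1) by (simp add: has_real_derivative_iff_has_vector_derivative has_vector_derivative_at_within)
  qed
  then show ?thesis by (simp add: diff_divide_distrib)
qed

lemma sinx_lip:
  fixes s t :: real
  assumes a: "0 < \<alpha>" "\<alpha> \<le> \<beta>" and d: "0 < \<delta>" "\<delta> \<le> s" "\<delta> \<le> t"
  shows "\<bar>integral {\<alpha>..\<beta>} (\<lambda>x. sin (s*x) / x) - integral {\<alpha>..\<beta>} (\<lambda>x. sin (t*x) / x)\<bar> \<le> 2 / \<delta> * \<bar>s - t\<bar>"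
proof -
  define \<Phi> where "\<Phi> r = integral (cbox \<alpha> \<beta>) (\<lambda>x. sin (r*x) / x)" for r
  define \<Phi>' where "\<Phi>' r = integral (cbox \<alpha> \<beta>) (\<lambda>x. cos (r*x))" for r
  have der: "(\<Phi> has_field_derivative \<Phi>' r) (at r within {\<delta>..})" if "r \<in> {\<delta>..}" for r
    unfolding \<Phi>_def \<Phi>'_def
  proof (rule leibniz_rule_field_derivative[where fx="\<lambda>r x. cos (r*x)"])
    fix r x :: real assume "x \<in> cbox \<alpha> \<beta>"
    then have "x \<noteq> 0" using a by auto
    have "((\<lambda>r. sin (r*x) / x) has_real_derivative (cos (r*x) * x / x)) (at r within {\<delta>..})"
      by (auto intro!: derivative_eq_intros)
    then show "((\<lambda>r. sin (r*x) / x) has_field_derivative cos (r*x)) (at r within {\<delta>..})"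
      using \<open>x \<noteq> 0\<close> by simp
  next
    fix r :: real
    show "(\<lambda>x. sin (r*x) / x) integrable_on cbox \<alpha> \<beta>"
      using a by (intro integrable_continuous continuous_intros) auto
  next
    show "continuous_on ({\<delta>..} \<times> cbox \<alpha> \<beta>) (\<lambda>(r, x). cos (r*x))"
      by (auto intro!: continuous_intros simp: split_beta)
  qed (use that in \<open>auto simp: convex_real_interval\<close>)
  have bnd: "norm (\<Phi>' r) \<le> 2 / \<delta>" if "r \<in> {\<delta>..}" for r
  proof -
    have r: "r \<noteq> 0" "\<delta> \<le> r" using that d by auto
    have "\<Phi>' r = (sin (r*\<beta>) - sin (r*\<alpha>)) / r"
      unfolding \<Phi>'_def using integral_unique[OF has_integral_cos_lin[OF r(1) a(2)]] by simp
    moreover have "\<bar>sin (r*\<beta>) - sin (r*\<alpha>)\<bar> \<le> 2"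
      using abs_sin_le_one[of "r*\<beta>"] abs_sin_le_one[of "r*\<alpha>"] by linarith
    ultimately have "\<bar>\<Phi>' r\<bar> \<le> 2 / \<bar>r\<bar>" using r by (simp add: abs_divide divide_right_mono)
    also have "\<dots> \<le> 2 / \<delta>" using r d by (simp add: frac_le)
    finally show ?thesis by simp
  qed
  have "norm (\<Phi> s - \<Phi> t) \<le> 2 / \<delta> * norm (s - t)"
    by (rule field_differentiable_bound[where S="{\<delta>..}", OF _ der bnd]) (use d in \<open>auto simp: convex_real_interval\<close>)
  then show ?thesis unfolding \<Phi>_def by simp
qed


lemma improper_UNIV:
  fixes h :: "real \<Rightarrow> real"
  assumes int: "\<And>a b. h integrable_on {a..b}"
    and tail: "\<And>e. e > 0 \<Longrightarrow> \<exists>B>0. \<forall>u v. B \<le> u \<longrightarrow> u \<le> v \<longrightarrow>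
                 \<bar>integral {u..v} h\<bar> \<le> e \<and> \<bar>integral {-v..-u} h\<bar> \<le> e"
  shows "h integrable_on UNIV" "(\<lambda>n. integral {-real n..real n} h) \<longlonglongrightarrow> integral UNIV h"
proof -
  define S where "S n = integral {-real n..real n} h" for n
  have comb: "integral {a..b} h = integral {a..c} h + integral {c..b} h" if "a \<le> c" "c \<le> b" for a b c
    using Henstock_Kurzweil_Integration.integral_combine[OF that int] by simp
  have tail3: "\<bar>integral {a..b} h - S K\<bar> \<le> 2 * e"
    if "e > 0" and B: "\<forall>u v. B \<le> u \<longrightarrow> u \<le> v \<longrightarrow> \<bar>integral {u..v} h\<bar> \<le> e \<and> \<bar>integral {-v..-u} h\<bar> \<le> e"
      and K: "B \<le> real K" and ab: "a \<le> - real K" "real K \<le> b" for e B a b K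
  proof -
    have "integral {a..b} h = integral {a..-real K} h + (integral {-real K..real K} h + integral {real K..b} h)"
      using ab by (simp add: comb[of a "-real K" b] comb[of "-real K" "real K" b])
    moreover have "\<bar>integral {real K..b} h\<bar> \<le> e" using B K ab by auto
    moreover have "\<bar>integral {-(-a)..-real K} h\<bar> \<le> e"
    proof -
      have "B \<le> real K" "real K \<le> -a" using K ab by auto
      then show ?thesis using B by blast
    qed
    ultimately show ?thesis by (simp add: S_def)
  qed
  have "Cauchy S"
  proof (rule CauchyI)
    fix e :: real assume e: "0 < e"
    obtain B where B0: "B > 0" and B: "\<forall>u v. B \<le> u \<longrightarrow> u \<le> v \<longrightarrow> \<bar>integral {u..v} h\<bar> \<le> e/8 \<and> \<bar>integral {-v..-u} h\<bar> \<le> e/8"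
      using tail[of "e/8"] e by auto
    obtain N :: nat where N: "B \<le> real N" using real_arch_simple by blast
    show "\<exists>N. \<forall>m\<ge>N. \<forall>n\<ge>N. norm (S m - S n) < e"
    proof (intro exI[of _ N] allI impI)
      fix m n assume "N \<le> m" "N \<le> n"
      note mn = this
      have "\<bar>integral {-real m..real m} h - S N\<bar> \<le> 2 * (e/8)"
        by (rule tail3[OF _ B N]) (use e mn in auto)
      moreover have "\<bar>integral {-real n..real n} h - S N\<bar> \<le> 2 * (e/8)"
        by (rule tail3[OF _ B N]) (use e mn in auto)
      ultimately have "\<bar>S m - S N\<bar> \<le> 2 * (e/8)" "\<bar>S n - S N\<bar> \<le> 2 * (e/8)"
        by (simp_all add: S_def)
      then show "norm (S m - S n) < e" using e unfolding abs_le_iff real_norm_def abs_less_iff by linarith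
    qed
  qed
  then obtain l where l: "S \<longlonglongrightarrow> l" using Cauchy_convergent_iff convergent_def by blast
  have hl: "(h has_integral l) UNIV"
    unfolding has_integral_alt'
  proof (intro conjI allI impI)
    fix a b :: real show "(\<lambda>x. if x \<in> UNIV then h x else 0) integrable_on cbox a b"
      using int by (simp add: cbox_interval)
  next
    fix e :: real assume e: "0 < e"
    obtain B where B0: "B > 0" and B: "\<forall>u v. B \<le> u \<longrightarrow> u \<le> v \<longrightarrow> \<bar>integral {u..v} h\<bar> \<le> e/4 \<and> \<bar>integral {-v..-u} h\<bar> \<le> e/4"
      using tail[of "e/4"] e by auto
    obtain N0 where N0: "\<And>n. n \<ge> N0 \<Longrightarrow> \<bar>S n - l\<bar> < e/4"
      using LIMSEQ_D[OF l, of "e/4"] e by auto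
    obtain N1 :: nat where N1: "B \<le> real N1" using real_arch_simple by blast
    define K where "K = max N0 N1"
    have K: "B \<le> real K" "\<bar>S K - l\<bar> < e/4" using N1 N0[of K] by (auto simp: K_def)
    show "\<exists>B>0. \<forall>a b. ball 0 B \<subseteq> cbox a b \<longrightarrow> norm (integral (cbox a b) (\<lambda>x. if x \<in> UNIV then h x else 0) - l) < e"
    proof (intro exI[of _ "real K + 1"] conjI allI impI)
      fix a b :: real assume sub: "ball 0 (real K + 1) \<subseteq> cbox a b"
      have b1: "-real K \<in> ball 0 (real K + 1)" and b2: "real K \<in> ball 0 (real K + 1)" by auto
      have "-real K \<in> cbox a b" by (rule subsetD[OF sub b1])
      moreover have "real K \<in> cbox a b" by (rule subsetD[OF sub b2])
      ultimately have "-real K \<in> {a..b}" "real K \<in> {a..b}" by (simp_all add: cbox_interval)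
      then have ab: "a \<le> - real K" "real K \<le> b" by auto
      have "\<bar>integral {a..b} h - S K\<bar> \<le> 2 * (e/4)" by (rule tail3[OF _ B K(1) ab]) (use e in simp)
      then have "\<bar>integral {a..b} h - l\<bar> < e"
        using K(2) e unfolding abs_le_iff abs_less_iff by linarith
      then show "norm (integral (cbox a b) (\<lambda>x. if x \<in> UNIV then h x else 0) - l) < e"
        by (simp add: cbox_interval)
    qed simp
  qed
  then show "h integrable_on UNIV" by blast
  show "(\<lambda>n. integral {-real n..real n} h) \<longlonglongrightarrow> integral UNIV h"
    using l integral_unique[OF hl] unfolding S_def by simp
qed

lemma mono_meas: "mono (f::real\<Rightarrow>real) \<Longrightarrow> f \<in> borel_measurable lebesgue"
  by (rule measurable_completion) (simp add: borel_measurable_mono measurable_lborel1)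
lemma AB:
  fixes W :: "real \<Rightarrow> real"
  assumes W: "integrable lebesgue W" and xW: "integrable lebesgue (\<lambda>x. x * W x)"
  shows "integrable lebesgue (\<lambda>x. sin (s*x) * W x)"
    "((\<lambda>x. sin (s*x) * W x) has_integral (LINT x|lebesgue. sin (s*x) * W x)) UNIV"
    "\<bar>(LINT x|lebesgue. sin (s*x) * W x) - (LINT x|lebesgue. sin (t*x) * W x)\<bar>
       \<le> \<bar>s - t\<bar> * (LINT x|lebesgue. \<bar>x * W x\<bar>)"
proof -
  have Wm[measurable]: "W \<in> borel_measurable lebesgue" using W by (rule borel_measurable_integrable)
  have idm[measurable]: "(\<lambda>x::real. x) \<in> borel_measurable lebesgue" by (simp add: measurable_completion)
  have int: "integrable lebesgue (\<lambda>x. sin (r*x) * W x)" for r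
    by (rule Bochner_Integration.integrable_bound[OF W]) (auto simp: abs_mult intro!: mult_left_le_one_le)
  then show "integrable lebesgue (\<lambda>x. sin (s*x) * W x)" .
  show "((\<lambda>x. sin (s*x) * W x) has_integral (LINT x|lebesgue. sin (s*x) * W x)) UNIV"
    by (rule has_integral_integral_lebesgue[OF int])
  have sd: "\<bar>sin a - sin b\<bar> \<le> \<bar>a - b\<bar>" for a b :: real
  proof -
    have "\<bar>sin a - sin b\<bar> = 2 * \<bar>sin ((a - b) / 2)\<bar> * \<bar>cos ((a + b) / 2)\<bar>"
      by (simp add: sin_diff_sin abs_mult)
    also have "\<dots> \<le> 2 * \<bar>(a - b) / 2\<bar> * 1"
      by (intro mult_mono abs_sin_x_le_abs_x abs_cos_le_one) auto
    finally show ?thesis by simp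
  qed
  have "(LINT x|lebesgue. sin (s*x) * W x) - (LINT x|lebesgue. sin (t*x) * W x)
      = (LINT x|lebesgue. sin (s*x) * W x - sin (t*x) * W x)"
    by (rule Bochner_Integration.integral_diff[symmetric, OF int int])
  also have "\<bar>\<dots>\<bar> \<le> (LINT x|lebesgue. \<bar>sin (s*x) * W x - sin (t*x) * W x\<bar>)"
    using integral_norm_bound[of lebesgue "\<lambda>x. sin (s*x) * W x - sin (t*x) * W x"] by simp
  also have "\<dots> \<le> (LINT x|lebesgue. \<bar>s - t\<bar> * \<bar>x * W x\<bar>)"
  proof (rule integral_mono)
    show "integrable lebesgue (\<lambda>x. \<bar>sin (s*x) * W x - sin (t*x) * W x\<bar>)"
      by (intro integrable_abs Bochner_Integration.integrable_diff int)
    show "integrable lebesgue (\<lambda>x. \<bar>s - t\<bar> * \<bar>x * W x\<bar>)"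
      by (intro integrable_mult_right integrable_abs xW)
    fix x :: real
    have "\<bar>sin (s*x) * W x - sin (t*x) * W x\<bar> = \<bar>sin (s*x) - sin (t*x)\<bar> * \<bar>W x\<bar>"
      by (simp add: abs_mult[symmetric] algebra_simps)
    also have "\<dots> \<le> \<bar>s*x - t*x\<bar> * \<bar>W x\<bar>" by (intro mult_right_mono sd) auto
    also have "\<dots> = \<bar>s - t\<bar> * \<bar>x * W x\<bar>" by (simp add: left_diff_distrib[symmetric] abs_mult)
    finally show "\<bar>sin (s*x) * W x - sin (t*x) * W x\<bar> \<le> \<bar>s - t\<bar> * \<bar>x * W x\<bar>" .
  qed
  also have "\<dots> = \<bar>s - t\<bar> * (LINT x|lebesgue. \<bar>x * W x\<bar>)" by simp
  finally show "\<bar>(LINT x|lebesgue. sin (s*x) * W x) - (LINT x|lebesgue. sin (t*x) * W x)\<bar>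
       \<le> \<bar>s - t\<bar> * (LINT x|lebesgue. \<bar>x * W x\<bar>)" .
qed

context
  fixes P Q G :: "real \<Rightarrow> real" and M :: real
  assumes mP: "mono P" and mQ: "mono Q" and bP: "\<And>x. \<bar>P x\<bar> \<le> M" and bQ: "\<And>x. \<bar>Q x\<bar> \<le> M"
    and GPQ: "G = (\<lambda>x. P x - Q x)"
begin

lemma M0: "0 \<le> M" using bP[of 0] by linarith

lemma Gb: "\<bar>G x\<bar> \<le> 2 * M" using bP[of x] bQ[of x] GPQ by auto

lemma J_int:
  assumes "0 < u" "u \<le> v"
  shows "(\<lambda>x. G x * (sin (s*x) / x)) integrable_on {u..v}"
proof (cases "s = 0")
  case True then show ?thesis using integrable_0 by simp
next
  case False
  show ?thesis unfolding GPQ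
    by (rule smvt_bound2(1)[OF mP mQ bP bQ sinx_bound(1)[OF False assms] assms(2), where K="4 / (\<bar>s\<bar> * u)"])
       (use assms False in \<open>auto intro!: order_trans[OF sinx_bound(2)[OF False]] simp: frac_le\<close>)
qed

lemma J_tail:
  assumes s: "s \<noteq> 0" and uv: "0 < u" "u \<le> v"
  shows "\<bar>integral {u..v} (\<lambda>x. G x * (sin (s*x) / x))\<bar> \<le> 16 * M / (\<bar>s\<bar> * u)"
proof -
  have "\<bar>integral {u..v} (\<lambda>x. G x * (sin (s*x) / x))\<bar> \<le> 4 * M * (4 / (\<bar>s\<bar> * u))"
    unfolding GPQ
    by (rule smvt_bound2(2)[OF mP mQ bP bQ sinx_bound(1)[OF s uv] uv(2)])
       (use uv s in \<open>auto intro!: order_trans[OF sinx_bound(2)[OF s]] simp: frac_le\<close>)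
  then show ?thesis by simp
qed

lemma J_lip:
  assumes uv: "0 < u" "u \<le> v" and d: "0 < \<delta>" "\<delta> \<le> s" "\<delta> \<le> t"
  shows "\<bar>integral {u..v} (\<lambda>x. G x * (sin (s*x) / x)) - integral {u..v} (\<lambda>x. G x * (sin (t*x) / x))\<bar>
          \<le> 8 * M / \<delta> * \<bar>s - t\<bar>"
proof -
  define \<phi> where "\<phi> x = sin (s*x) / x - sin (t*x) / x" for x
  have phiint: "\<phi> integrable_on {\<alpha>..\<beta>}" if "0 < \<alpha>" for \<alpha> \<beta>
    unfolding \<phi>_def using that by (intro integrable_continuous_interval continuous_intros) auto
  have eq: "integral {u..v} (\<lambda>x. G x * (sin (s*x) / x)) - integral {u..v} (\<lambda>x. G x * (sin (t*x) / x))
      = integral {u..v} (\<lambda>x. (P x - Q x) * \<phi> x)"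
  proof -
    have "integral {u..v} (\<lambda>x. G x * (sin (s*x) / x)) - integral {u..v} (\<lambda>x. G x * (sin (t*x) / x))
      = integral {u..v} (\<lambda>x. G x * (sin (s*x) / x) - G x * (sin (t*x) / x))"
      by (rule integral_diff[symmetric]; rule J_int[OF uv])
    also have "\<dots> = integral {u..v} (\<lambda>x. (P x - Q x) * \<phi> x)"
      by (rule integral_cong) (simp add: GPQ \<phi>_def algebra_simps)
    finally show ?thesis .
  qed
  have "\<bar>integral {u..v} (\<lambda>x. (P x - Q x) * \<phi> x)\<bar> \<le> 4 * M * (2 / \<delta> * \<bar>s - t\<bar>)"
  proof (rule smvt_bound2(2)[OF mP mQ bP bQ phiint[OF uv(1)] uv(2)])
    fix \<alpha> \<beta> assume ab: "u \<le> \<alpha>" "\<alpha> \<le> \<beta>" "\<beta> \<le> v"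
    have "integral {\<alpha>..\<beta>} \<phi> = integral {\<alpha>..\<beta>} (\<lambda>x. sin (s*x) / x) - integral {\<alpha>..\<beta>} (\<lambda>x. sin (t*x) / x)"
      unfolding \<phi>_def using ab uv
      by (intro integral_diff integrable_continuous_interval continuous_intros) auto
    then show "\<bar>integral {\<alpha>..\<beta>} \<phi>\<bar> \<le> 2 / \<delta> * \<bar>s - t\<bar>"
      using sinx_lip[OF _ ab(2) d] ab uv by simp
  qed
  then show ?thesis unfolding eq by simp
qed

lemma J_supbound:
  assumes pq: "0 < p" "p \<le> q" and B: "\<And>x. x \<in> {p..q} \<Longrightarrow> \<bar>G x\<bar> \<le> B"
  shows "\<bar>integral {p..q} (\<lambda>x. G x * (sin (s*x) / x))\<bar> \<le> B * \<bar>s\<bar> * (q - p)"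
proof -
  have B0: "0 \<le> B" using B[of p] pq by force
  have "norm (integral {p..q} (\<lambda>x. G x * (sin (s*x) / x))) \<le> (B * \<bar>s\<bar>) * Henstock_Kurzweil_Integration.content {p..q}"
  proof (rule has_integral_bound_real[where S="{}"])
    show "((\<lambda>x. G x * (sin (s*x) / x)) has_integral integral {p..q} (\<lambda>x. G x * (sin (s*x) / x))) {p..q}"
      using J_int[OF pq] by blast
    fix x assume x: "x \<in> {p..q} - {}"
    then have x0: "0 < x" using pq by auto
    have "\<bar>sin (s*x) / x\<bar> \<le> \<bar>s\<bar>"
    proof -
      have "\<bar>sin (s*x)\<bar> \<le> \<bar>s\<bar> * x" using abs_sin_x_le_abs_x[of "s*x"] x0 by (simp add: abs_mult)
      then show ?thesis using x0 by (simp add: abs_divide pos_divide_le_eq)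
    qed
    then have "\<bar>G x\<bar> * \<bar>sin (s*x) / x\<bar> \<le> B * \<bar>s\<bar>"
      using B[of x] x B0 by (intro mult_mono) auto
    then show "norm (G x * (sin (s*x) / x)) \<le> B * \<bar>s\<bar>"
      by (simp only: real_norm_def abs_mult)
  qed (use B0 in auto)
  then show ?thesis using pq by simp
qed

lemma J_combine:
  assumes "0 < p" "p \<le> q" "q \<le> r"
  shows "integral {p..r} (\<lambda>x. G x * (sin (s*x) / x)) =
     integral {p..q} (\<lambda>x. G x * (sin (s*x) / x)) + integral {q..r} (\<lambda>x. G x * (sin (s*x) / x))"
  using Henstock_Kurzweil_Integration.integral_combine[OF assms(2,3) J_int[of p r s]] assms by simp

lemma J_small:
  assumes lim: "(G \<longlongrightarrow> 0) at_top" and e: "0 < e"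
  shows "\<exists>\<eta>>0. \<forall>s v. \<bar>s\<bar> < \<eta> \<longrightarrow> 1 \<le> v \<longrightarrow> \<bar>integral {1..v} (\<lambda>x. G x * (sin (s*x) / x))\<bar> \<le> e"
proof -
  define T where "T = 48 * (M + 1) / e"
  have T0: "0 < T" using e M0 by (simp add: T_def)
  define \<epsilon> where "\<epsilon> = e / (3 * T)"
  have \<epsilon>0: "0 < \<epsilon>" using e T0 by (simp add: \<epsilon>_def)
  obtain X where X: "\<And>x. X \<le> x \<Longrightarrow> \<bar>G x\<bar> < \<epsilon>"
    using order_tendstoD(2)[OF tendsto_rabs[OF lim, simplified] \<epsilon>0] by (auto simp: eventually_at_top_linorder)
  define X0 where "X0 = max X 1"
  have X01: "1 \<le> X0" and X0: "\<And>x. X0 \<le> x \<Longrightarrow> \<bar>G x\<bar> \<le> \<epsilon>"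
    using X by (auto simp: X0_def less_imp_le)
  define \<eta> where "\<eta> = min (e / (3 * X0 * (2 * M + 1))) (T / X0)"
  have \<eta>0: "0 < \<eta>" using e X01 M0 T0 by (simp add: \<eta>_def)
  show ?thesis
  proof (intro exI[of _ \<eta>] conjI allI impI \<eta>0)
    fix s v :: real assume s: "\<bar>s\<bar> < \<eta>" and v: "1 \<le> v"
    show "\<bar>integral {1..v} (\<lambda>x. G x * (sin (s*x) / x))\<bar> \<le> e"
    proof (cases "s = 0")
      case True then show ?thesis using e by simp
    next
      case s0: False
      have sl1: "\<bar>s\<bar> * (3 * X0 * (2 * M + 1)) \<le> e"
        using s by (simp add: \<eta>_def pos_less_divide_eq M0 X01 less_imp_le[OF add_pos_nonneg] mult.commute
           flip: pos_less_divide_eq) (smt (verit) M0 X01 mult_pos_pos pos_less_divide_eq)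
      have head: "\<bar>integral {1..w} (\<lambda>x. G x * (sin (s*x) / x))\<bar> \<le> e / 3" if "1 \<le> w" "w \<le> X0" for w
      proof -
        have "\<bar>integral {1..w} (\<lambda>x. G x * (sin (s*x) / x))\<bar> \<le> (2 * M) * \<bar>s\<bar> * (w - 1)"
          using that by (intro J_supbound) (auto intro: Gb)
        also have "\<dots> \<le> (2 * M + 1) * \<bar>s\<bar> * X0"
          using that M0 by (intro mult_mono) auto
        also have "\<dots> \<le> e / 3" using sl1 by (simp add: algebra_simps)
        finally show ?thesis .
      qed
      define A where "A = T / \<bar>s\<bar>"
      have A0: "X0 \<le> A"
      proof -
        have "\<bar>s\<bar> < T / X0" using s by (simp add: \<eta>_def)
        then have "\<bar>s\<bar> * X0 < T" using X01 by (simp add: pos_less_divide_eq)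
        then show ?thesis using s0 by (simp add: A_def pos_le_divide_eq mult.commute)
      qed
      have mid: "\<bar>integral {X0..w} (\<lambda>x. G x * (sin (s*x) / x))\<bar> \<le> e / 3" if "X0 \<le> w" "w \<le> A" for w
      proof -
        have "\<bar>integral {X0..w} (\<lambda>x. G x * (sin (s*x) / x))\<bar> \<le> \<epsilon> * \<bar>s\<bar> * (w - X0)"
          using that X01 by (intro J_supbound) (auto intro: X0)
        also have "\<dots> \<le> \<epsilon> * \<bar>s\<bar> * A"
          using that X01 \<epsilon>0 by (intro mult_left_mono) auto
        also have "\<dots> = e / 3" using s0 T0 by (simp add: A_def \<epsilon>_def)
        finally show ?thesis .
      qed
      show ?thesis
      proof (cases "v \<le> X0")
        case True then show ?thesis using head[OF v True] e by simp
      next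
        case vX: False
        have split1: "integral {1..v} (\<lambda>x. G x * (sin (s*x) / x)) =
            integral {1..X0} (\<lambda>x. G x * (sin (s*x) / x)) + integral {X0..v} (\<lambda>x. G x * (sin (s*x) / x))"
          using vX X01 by (intro J_combine) auto
        have h1: "\<bar>integral {1..X0} (\<lambda>x. G x * (sin (s*x) / x))\<bar> \<le> e / 3" using head X01 by simp
        have "\<bar>integral {X0..v} (\<lambda>x. G x * (sin (s*x) / x))\<bar> \<le> 2 * e / 3"
        proof (cases "v \<le> A")
          case True then show ?thesis using mid[of v] vX e by simp
        next
          case vA: False
          have split2: "integral {X0..v} (\<lambda>x. G x * (sin (s*x) / x)) =
              integral {X0..A} (\<lambda>x. G x * (sin (s*x) / x)) + integral {A..v} (\<lambda>x. G x * (sin (s*x) / x))"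
            using vA A0 X01 by (intro J_combine) auto
          have t: "\<bar>integral {A..v} (\<lambda>x. G x * (sin (s*x) / x))\<bar> \<le> 16 * M / (\<bar>s\<bar> * A)"
            using vA A0 X01 by (intro J_tail s0) auto
          have "16 * M / (\<bar>s\<bar> * A) = 16 * M / T" using s0 by (simp add: A_def)
          also have "\<dots> \<le> e / 3"
          proof -
            have "16 * M * e \<le> e / 3 * (48 * (M + 1))" using e M0 by (simp add: algebra_simps)
            then show ?thesis using e M0 T0 by (simp add: T_def field_simps)
          qed
          finally show ?thesis using split2 t mid[OF A0 order_refl] by linarith
        qed
        then show ?thesis using split1 h1 by linarith
      qed
    qed
  qed
qed

end

definition cfun :: "(real \<Rightarrow> real) \<Rightarrow> real \<Rightarrow> real \<Rightarrow> real" where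
  "cfun G s x = (if \<bar>x\<bar> < 1 then 0 else G x * (sin (s*x) / x))"

context
  fixes P Q G :: "real \<Rightarrow> real" and M :: real
  assumes mP: "mono P" and mQ: "mono Q" and bP: "\<And>x. \<bar>P x\<bar> \<le> M" and bQ: "\<And>x. \<bar>Q x\<bar> \<le> M"
    and GPQ: "G = (\<lambda>x. P x - Q x)" and ltop: "(G \<longlongrightarrow> 0) at_top" and lbot: "(G \<longlongrightarrow> 0) at_bot"
begin

lemma refl_dec:
  shows "mono (\<lambda>y. - Q (-y))" "mono (\<lambda>y. - P (-y))" "\<And>x. \<bar>- Q (-x)\<bar> \<le> M" "\<And>x. \<bar>- P (-x)\<bar> \<le> M"
    "(\<lambda>y. G (-y)) = (\<lambda>x. - Q (-x) - - P (-x))" "((\<lambda>y. G (-y)) \<longlongrightarrow> 0) at_top"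
proof -
  show "mono (\<lambda>y. - Q (-y))" using mQ by (auto simp: mono_def)
  show "mono (\<lambda>y. - P (-y))" using mP by (auto simp: mono_def)
  show "\<bar>- Q (-x)\<bar> \<le> M" for x using bQ by simp
  show "\<bar>- P (-x)\<bar> \<le> M" for x using bP by simp
  show "(\<lambda>y. G (-y)) = (\<lambda>x. - Q (-x) - - P (-x))" by (simp add: GPQ)
  show "((\<lambda>y. G (-y)) \<longlongrightarrow> 0) at_top" using lbot by (simp add: filterlim_at_bot_mirror)
qed

lemmas JG_int = J_int[OF mP mQ bP bQ GPQ]
lemmas JG'_int = J_int[OF refl_dec(1-5)]

lemma c_trunc:
  assumes n: "1 \<le> n"
  shows "(cfun G s has_integral (integral {1..n} (\<lambda>x. G x * (sin (s*x) / x)) +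
            integral {1..n} (\<lambda>x. G (-x) * (sin (s*x) / x)))) {-n..n}"
proof -
  define J1 where "J1 = integral {1..n} (\<lambda>x. G x * (sin (s*x) / x))"
  define J2 where "J2 = integral {1..n} (\<lambda>x. G (-x) * (sin (s*x) / x))"
  have hh: "((\<lambda>x. G x * (sin (s*x) / x)) has_integral J1) {1..n}"
    unfolding J1_def using JG_int[of 1 n s] n by auto
  have h1: "(cfun G s has_integral J1) {1..n}"
    by (intro has_integral_spike_finite[where S="{}", OF _ _ hh]) (auto simp: cfun_def)
  have hh2: "((\<lambda>x. G (-x) * (sin (s*x) / x)) has_integral J2) {1..n}"
    unfolding J2_def using JG'_int[of 1 n s] n by auto
  have "((\<lambda>x. cfun G s (-x)) has_integral J2) {1..n}"
    by (intro has_integral_spike_finite[where S="{}", OF _ _ hh2]) (auto simp: cfun_def)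
  then have "((\<lambda>x. cfun G s (-x)) has_integral J2) {-(-1)..-(-n)}" by simp
  then have h2: "(cfun G s has_integral J2) {-n..-1}"
    by (simp only: has_integral_reflect_real)
  have h0: "(cfun G s has_integral 0) {-1..1}"
    by (rule has_integral_spike_finite[where S="{-1,1}", OF _ _ has_integral_0]) (auto simp: cfun_def)
  have h3: "(cfun G s has_integral (J2 + 0)) {-n..1}"
    by (rule has_integral_combine[OF _ _ h2 h0]) (use n in auto)
  have "(cfun G s has_integral (J2 + 0 + J1)) {-n..n}"
    by (rule has_integral_combine[OF _ _ h3 h1]) (use n in auto)
  then show ?thesis by (simp add: J1_def J2_def add.commute)
qed

lemma c_int: "cfun G s integrable_on {a..b}"
proof -
  define n where "n = max 1 (max \<bar>a\<bar> \<bar>b\<bar>)"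
  have "cfun G s integrable_on {-n..n}" using c_trunc[of n s] by (auto simp: n_def)
  then show ?thesis
    by (rule integrable_on_subinterval) (auto simp: n_def)
qed

lemma c_improper:
  shows "cfun G s integrable_on UNIV" "(\<lambda>n. integral {-real n..real n} (cfun G s)) \<longlonglongrightarrow> integral UNIV (cfun G s)"
proof -
  have tail: "\<exists>B>0. \<forall>u v. B \<le> u \<longrightarrow> u \<le> v \<longrightarrow>
                 \<bar>integral {u..v} (cfun G s)\<bar> \<le> e \<and> \<bar>integral {-v..-u} (cfun G s)\<bar> \<le> e" if e: "e > 0" for e
  proof (cases "s = 0")
    case True
    then have "cfun G s = (\<lambda>x. 0)" by (auto simp: cfun_def)
    then show ?thesis using e by (intro exI[of _ 1]) auto
  next
    case s0: False
    define B where "B = max 1 (16 * M / (\<bar>s\<bar> * e))"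
    show ?thesis
    proof (intro exI[of _ B] conjI allI impI)
      show "0 < B" by (simp add: B_def)
      fix u v assume uv: "B \<le> u" "u \<le> v"
      have u1: "1 \<le> u" using uv by (simp add: B_def)
      have bnd: "16 * M / (\<bar>s\<bar> * u) \<le> e"
      proof -
        have "16 * M / (\<bar>s\<bar> * e) \<le> u" using uv by (simp add: B_def)
        then have "16 * M \<le> u * (\<bar>s\<bar> * e)" using s0 e by (simp add: pos_divide_le_eq)
        then show ?thesis using s0 u1 by (simp add: pos_divide_le_eq mult.commute mult.left_commute)
      qed
      have "integral {u..v} (cfun G s) = integral {u..v} (\<lambda>x. G x * (sin (s*x) / x))"
        using u1 by (intro integral_cong) (auto simp: cfun_def)
      also have "\<bar>\<dots>\<bar> \<le> 16 * M / (\<bar>s\<bar> * u)"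
        using J_tail[OF mP mQ bP bQ GPQ s0] u1 uv by simp
      finally show "\<bar>integral {u..v} (cfun G s)\<bar> \<le> e" using bnd by linarith
      have "integral {-v..-u} (cfun G s) = integral {u..v} (\<lambda>y. cfun G s (-y))"
        using Henstock_Kurzweil_Integration.integral_reflect_real[of v u "\<lambda>y. cfun G s (-y)"] by simp
      also have "\<dots> = integral {u..v} (\<lambda>x. G (-x) * (sin (s*x) / x))"
        using u1 by (intro integral_cong) (auto simp: cfun_def)
      also have "\<bar>\<dots>\<bar> \<le> 16 * M / (\<bar>s\<bar> * u)"
        using J_tail[OF refl_dec(1-5) s0] u1 uv by simp
      finally show "\<bar>integral {-v..-u} (cfun G s)\<bar> \<le> e" using bnd by linarith
    qed
  qed
  show "cfun G s integrable_on UNIV" by (rule improper_UNIV(1)[OF c_int tail])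
  show "(\<lambda>n. integral {-real n..real n} (cfun G s)) \<longlonglongrightarrow> integral UNIV (cfun G s)"
    by (rule improper_UNIV(2)[OF c_int tail])
qed

lemma C_lim:
  "(\<lambda>n. integral {1..real n} (\<lambda>x. G x * (sin (s*x) / x)) + integral {1..real n} (\<lambda>x. G (-x) * (sin (s*x) / x)))
     \<longlonglongrightarrow> integral UNIV (cfun G s)"
proof (rule Lim_transform_eventually[OF c_improper(2)])
  show "\<forall>\<^sub>F n in sequentially. integral {-real n..real n} (cfun G s) =
      integral {1..real n} (\<lambda>x. G x * (sin (s*x) / x)) + integral {1..real n} (\<lambda>x. G (-x) * (sin (s*x) / x))"
    using eventually_ge_at_top[of "1::nat"]
    by eventually_elim (rule integral_unique[OF c_trunc], simp)
qed

lemma C_lip: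
  assumes d: "0 < \<delta>" "\<delta> \<le> s" "\<delta> \<le> t"
  shows "\<bar>integral UNIV (cfun G s) - integral UNIV (cfun G t)\<bar> \<le> 16 * M / \<delta> * \<bar>s - t\<bar>"
proof -
  define T where "T r n = integral {1..real n} (\<lambda>x. G x * (sin (r*x) / x)) + integral {1..real n} (\<lambda>x. G (-x) * (sin (r*x) / x))" for r n
  have lim: "(\<lambda>n. \<bar>T s n - T t n\<bar>) \<longlonglongrightarrow> \<bar>integral UNIV (cfun G s) - integral UNIV (cfun G t)\<bar>"
    unfolding T_def by (intro tendsto_rabs tendsto_diff C_lim)
  show ?thesis
  proof (rule tendsto_upperbound[OF lim _ sequentially_bot])
    show "\<forall>\<^sub>F n in sequentially. \<bar>T s n - T t n\<bar> \<le> 16 * M / \<delta> * \<bar>s - t\<bar>"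
      using eventually_ge_at_top[of "1::nat"]
    proof eventually_elim
      case (elim n)
      then have n: "(0::real) < 1" "1 \<le> real n" by auto
      have a: "\<bar>integral {1..real n} (\<lambda>x. G x * (sin (s*x) / x)) - integral {1..real n} (\<lambda>x. G x * (sin (t*x) / x))\<bar>
          \<le> 8 * M / \<delta> * \<bar>s - t\<bar>" by (rule J_lip[OF mP mQ bP bQ GPQ n d])
      have b: "\<bar>integral {1..real n} (\<lambda>x. G (-x) * (sin (s*x) / x)) - integral {1..real n} (\<lambda>x. G (-x) * (sin (t*x) / x))\<bar>
          \<le> 8 * M / \<delta> * \<bar>s - t\<bar>" by (rule J_lip[OF refl_dec(1-5) n d])
      show ?case using a b unfolding T_def by (simp add: abs_le_iff)
    qed
  qed
qed

lemma C_small: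
  assumes e: "0 < e"
  shows "\<exists>\<eta>>0. \<forall>s. \<bar>s\<bar> < \<eta> \<longrightarrow> \<bar>integral UNIV (cfun G s)\<bar> \<le> e"
proof -
  obtain \<eta>1 where \<eta>1: "\<eta>1 > 0" "\<And>s v. \<bar>s\<bar> < \<eta>1 \<Longrightarrow> 1 \<le> v \<Longrightarrow> \<bar>integral {1..v} (\<lambda>x. G x * (sin (s*x) / x))\<bar> \<le> e/2"
    using J_small[OF mP mQ bP bQ GPQ ltop, of "e/2"] e by auto
  obtain \<eta>2 where \<eta>2: "\<eta>2 > 0" "\<And>s v. \<bar>s\<bar> < \<eta>2 \<Longrightarrow> 1 \<le> v \<Longrightarrow> \<bar>integral {1..v} (\<lambda>x. G (-x) * (sin (s*x) / x))\<bar> \<le> e/2"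
    using J_small[OF refl_dec(1-6), of "e/2"] e by auto
  show ?thesis
  proof (intro exI[of _ "min \<eta>1 \<eta>2"] conjI allI impI)
    show "0 < min \<eta>1 \<eta>2" using \<eta>1 \<eta>2 by simp
    fix s :: real assume s: "\<bar>s\<bar> < min \<eta>1 \<eta>2"
    show "\<bar>integral UNIV (cfun G s)\<bar> \<le> e"
    proof (rule tendsto_upperbound[OF tendsto_rabs[OF C_lim] _ sequentially_bot])
      show "\<forall>\<^sub>F n in sequentially. \<bar>integral {1..real n} (\<lambda>x. G x * (sin (s*x) / x)) + integral {1..real n} (\<lambda>x. G (-x) * (sin (s*x) / x))\<bar> \<le> e"
        using eventually_ge_at_top[of "1::nat"]
      proof eventually_elim
        case (elim n)
        then have "1 \<le> real n" by simp
        then have "\<bar>integral {1..real n} (\<lambda>x. G x * (sin (s*x) / x))\<bar> \<le> e/2"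
            "\<bar>integral {1..real n} (\<lambda>x. G (-x) * (sin (s*x) / x))\<bar> \<le> e/2"
          using \<eta>1(2)[of s "real n"] \<eta>2(2)[of s "real n"] s by auto
        then show ?case unfolding abs_le_iff by linarith
      qed
    qed
  qed
qed

end

lemma osc_bound:
  assumes cd: "c \<le> d" and L: "0 \<le> L"
    and lip: "\<And>p q. p \<in> {c..d} \<Longrightarrow> q \<in> {c..d} \<Longrightarrow> \<bar>F p - F q\<bar> \<le> L * \<bar>p - q\<bar>"
  shows "osc F c d \<le> L * (d - c)"
  unfolding osc_def
proof (rule cSUP_least)
  show "{c..d} \<times> {c..d} \<noteq> {}" using cd by auto
  fix x assume x: "x \<in> {c..d} \<times> {c..d}"
  then have "\<bar>F (fst x) - F (snd x)\<bar> \<le> L * \<bar>fst x - snd x\<bar>" by (intro lip) auto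
  also have "\<dots> \<le> L * (d - c)" using x L by (intro mult_left_mono) auto
  finally show "\<bar>F (fst x) - F (snd x)\<bar> \<le> L * (d - c)" .
qed

lemma ACG_generic:
  fixes F :: "real \<Rightarrow> real"
  assumes lip: "\<And>\<delta>. \<delta> > 0 \<Longrightarrow> \<exists>L. \<forall>s t. \<delta> \<le> s \<longrightarrow> \<delta> \<le> t \<longrightarrow> \<bar>F s - F t\<bar> \<le> L * \<bar>s - t\<bar>"
    and odd: "\<And>s. F (-s) = - F s"
    and small: "\<And>e. e > 0 \<Longrightarrow> \<exists>\<eta>>0. \<forall>s. \<bar>s\<bar> < \<eta> \<longrightarrow> \<bar>F s\<bar> \<le> e"
  shows "ACG_star_loc F"
proof -
  have F0: "F 0 = 0" using odd[of 0] by simp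
  have lip2: "\<exists>L\<ge>0. \<forall>s t. (\<delta> \<le> s \<and> \<delta> \<le> t) \<or> (s \<le> -\<delta> \<and> t \<le> -\<delta>) \<longrightarrow> \<bar>F s - F t\<bar> \<le> L * \<bar>s - t\<bar>"
    if d: "\<delta> > 0" for \<delta>
  proof -
    obtain L where L: "\<And>s t. \<delta> \<le> s \<Longrightarrow> \<delta> \<le> t \<Longrightarrow> \<bar>F s - F t\<bar> \<le> L * \<bar>s - t\<bar>" using lip[OF d] by blast
    show ?thesis
    proof (intro exI[of _ "max L 0"] conjI allI impI)
      fix s t assume st: "(\<delta> \<le> s \<and> \<delta> \<le> t) \<or> (s \<le> -\<delta> \<and> t \<le> -\<delta>)"
      have "\<bar>F s - F t\<bar> \<le> L * \<bar>s - t\<bar>"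
      proof (cases "\<delta> \<le> s \<and> \<delta> \<le> t")
        case True then show ?thesis using L by blast
      next
        case False
        then have "\<delta> \<le> -s" "\<delta> \<le> -t" using st by auto
        then have "\<bar>F (-s) - F (-t)\<bar> \<le> L * \<bar>-s - -t\<bar>" by (rule L)
        then show ?thesis by (simp add: odd abs_minus_commute)
      qed
      also have "\<dots> \<le> max L 0 * \<bar>s - t\<bar>" by (intro mult_right_mono) auto
      finally show "\<bar>F s - F t\<bar> \<le> max L 0 * \<bar>s - t\<bar>" .
    qed simp
  qed
  have cont: "isCont F s" for s
    unfolding continuous_at_eps_delta dist_real_def
  proof (intro allI impI)
    fix e :: real assume e: "0 < e"
    show "\<exists>d>0. \<forall>x'. \<bar>x' - s\<bar> < d \<longrightarrow> \<bar>F x' - F s\<bar> < e"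
    proof (cases "s = 0")
      case True
      obtain \<eta> where \<eta>: "\<eta> > 0" "\<And>s. \<bar>s\<bar> < \<eta> \<Longrightarrow> \<bar>F s\<bar> \<le> e/2" using small[of "e/2"] e by auto
      show ?thesis using \<eta> e True F0 by (intro exI[of _ \<eta>]) force
    next
      case False
      define \<delta> where "\<delta> = \<bar>s\<bar> / 2"
      have d0: "\<delta> > 0" using False by (simp add: \<delta>_def)
      obtain L where L: "L \<ge> 0" "\<And>s t. (\<delta> \<le> s \<and> \<delta> \<le> t) \<or> (s \<le> -\<delta> \<and> t \<le> -\<delta>) \<Longrightarrow> \<bar>F s - F t\<bar> \<le> L * \<bar>s - t\<bar>"
        using lip2[OF d0] by blast
      show ?thesis
      proof (intro exI[of _ "min \<delta> (e / (L + 1))"] conjI allI impI)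
        show "0 < min \<delta> (e / (L + 1))" using d0 e L by simp
        fix t assume t: "\<bar>t - s\<bar> < min \<delta> (e / (L + 1))"
        have "(\<delta> \<le> t \<and> \<delta> \<le> s) \<or> (t \<le> -\<delta> \<and> s \<le> -\<delta>)"
        proof -
          have "t - s < \<delta>" "s - t < \<delta>" using t by (auto simp: abs_less_iff)
          then show ?thesis using False by (cases "s > 0") (auto simp: \<delta>_def)
        qed
        then have "\<bar>F t - F s\<bar> \<le> L * \<bar>t - s\<bar>" by (rule L(2))
        also have "\<dots> \<le> L * (e / (L + 1))" using t L by (intro mult_left_mono) auto
        also have "\<dots> < e" using e L by (simp add: field_simps)
        finally show "\<bar>F t - F s\<bar> < e" .
      qed
    qed
  qed
  show ?thesis unfolding ACG_star_loc_def
  proof (intro allI impI)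
    fix a b :: real assume ab: "a \<le> b"
    define E where "E n = {s \<in> {a..b}. s = 0 \<or> 1 / (real n + 1) \<le> \<bar>s\<bar>}" for n :: nat
    show "ACG_star_on F a b" unfolding ACG_star_on_def
    proof (intro conjI exI[of _ E] allI)
      show "continuous_on {a..b} F" using cont by (simp add: continuous_at_imp_continuous_on)
      show "(\<Union>n. E n) = {a..b}"
      proof
        show "(\<Union>n. E n) \<subseteq> {a..b}" by (auto simp: E_def)
        show "{a..b} \<subseteq> (\<Union>n. E n)"
        proof
          fix s assume s: "s \<in> {a..b}"
          show "s \<in> (\<Union>n. E n)"
          proof (cases "s = 0")
            case True then show ?thesis using s by (auto simp: E_def)
          next
            case False
            then obtain n where "inverse (real (Suc n)) < \<bar>s\<bar>" using reals_Archimedean[of "\<bar>s\<bar>"] by auto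
            then have "1 / (real n + 1) \<le> \<bar>s\<bar>" by (simp add: field_simps)
            then show ?thesis using s by (auto simp: E_def)
          qed
        qed
      qed
      fix n :: nat
      show "AC_star_on F (E n)" unfolding AC_star_on_def
      proof (intro allI impI)
        fix \<epsilon> :: real assume \<epsilon>: "0 < \<epsilon>"
        define \<delta> where "\<delta> = 1 / (real n + 1)"
        have d0: "\<delta> > 0" by (simp add: \<delta>_def)
        obtain L where L: "L \<ge> 0" "\<And>s t. (\<delta> \<le> s \<and> \<delta> \<le> t) \<or> (s \<le> -\<delta> \<and> t \<le> -\<delta>) \<Longrightarrow> \<bar>F s - F t\<bar> \<le> L * \<bar>s - t\<bar>"
          using lip2[OF d0] by blast
        define \<eta> where "\<eta> = min \<delta> (\<epsilon> / (L + 1))"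
        show "\<exists>\<eta>>0. \<forall>D. finite D \<and> (\<forall>(c, d)\<in>D. c \<le> d \<and> c \<in> E n \<and> d \<in> E n) \<and>
                (\<forall>(c, d)\<in>D. \<forall>(c', d')\<in>D. (c, d) \<noteq> (c', d') \<longrightarrow> {c<..<d} \<inter> {c'<..<d'} = {}) \<and>
                (\<Sum>(c, d)\<in>D. d - c) < \<eta> \<longrightarrow> (\<Sum>(c, d)\<in>D. osc F c d) < \<epsilon>"
        proof (intro exI[of _ \<eta>] conjI allI impI)
          show "0 < \<eta>" using d0 \<epsilon> L by (simp add: \<eta>_def)
          fix D :: "(real \<times> real) set"
          assume H: "finite D \<and> (\<forall>(c, d)\<in>D. c \<le> d \<and> c \<in> E n \<and> d \<in> E n) \<and>
                (\<forall>(c, d)\<in>D. \<forall>(c', d')\<in>D. (c, d) \<noteq> (c', d') \<longrightarrow> {c<..<d} \<inter> {c'<..<d'} = {}) \<and>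
                (\<Sum>(c, d)\<in>D. d - c) < \<eta>"
          then have fin: "finite D" and mem: "\<And>c d. (c, d) \<in> D \<Longrightarrow> c \<le> d \<and> c \<in> E n \<and> d \<in> E n"
            and sm: "(\<Sum>(c, d)\<in>D. d - c) < \<eta>" by auto
          have each: "osc F c d \<le> (L + 1) * (d - c)" if cd: "(c, d) \<in> D" for c d
          proof -
            have c: "c \<le> d" "c = 0 \<or> \<delta> \<le> \<bar>c\<bar>" "d = 0 \<or> \<delta> \<le> \<bar>d\<bar>"
              using mem[OF cd] by (auto simp: E_def \<delta>_def)
            have "d - c \<le> (\<Sum>(c, d)\<in>D. d - c)"
              using member_le_sum[of "(c,d)" D "\<lambda>(c, d). d - c"] cd fin mem by (force simp: split_beta)
            then have dc: "d - c < \<delta>" using sm by (simp add: \<eta>_def)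
            have "osc F c d \<le> L * (d - c)"
            proof (rule osc_bound[OF c(1) L(1)])
              fix p q assume pq: "p \<in> {c..d}" "q \<in> {c..d}"
              have "c = d \<or> \<delta> \<le> c \<or> d \<le> -\<delta>" using c dc by auto
              then show "\<bar>F p - F q\<bar> \<le> L * \<bar>p - q\<bar>"
              proof (elim disjE)
                assume "c = d" then show ?thesis using pq by simp
              next
                assume "\<delta> \<le> c" then show ?thesis using pq by (intro L(2)) auto
              next
                assume "d \<le> -\<delta>" then show ?thesis using pq by (intro L(2)) auto
              qed
            qed
            also have "\<dots> \<le> (L + 1) * (d - c)" using c by (intro mult_right_mono) auto
            finally show ?thesis .
          qed
          have "(\<Sum>(c, d)\<in>D. osc F c d) \<le> (\<Sum>(c, d)\<in>D. (L + 1) * (d - c))"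
            by (rule sum_mono) (use each in auto)
          also have "\<dots> = (L + 1) * (\<Sum>(c, d)\<in>D. d - c)"
            by (simp add: sum_distrib_left split_beta)
          also have "\<dots> < (L + 1) * \<eta>" using sm L by (intro mult_strict_left_mono) auto
          also have "\<dots> \<le> (L + 1) * (\<epsilon> / (L + 1))" using L by (intro mult_left_mono) (auto simp: \<eta>_def)
          also have "\<dots> = \<epsilon>" using L by simp
          finally show "(\<Sum>(c, d)\<in>D. osc F c d) < \<epsilon>" .
        qed
      qed
    qed
  qed
qed


theorem mainTheorem6:
  fixes f :: "real \<Rightarrow> real"
  assumes "L1_plus_BV0 f"
    and "L1_plus_BV0 (\<lambda>t. t * f t)"
  shows "ACG_star_loc (FS_HK f)"
proof -
  obtain f1 f2 where f1: "integrable lebesgue f1" and f2: "BV0 f2" and ff: "f = (\<lambda>x. f1 x + f2 x)"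
    using assms(1) unfolding L1_plus_BV0_def by blast
  obtain g1 g2 where g1: "integrable lebesgue g1" and g2: "BV0 g2" and gg: "(\<lambda>t. t * f t) = (\<lambda>x. g1 x + g2 x)"
    using assms(2) unfolding L1_plus_BV0_def by blast
  have gx: "x * f x = g1 x + g2 x" for x using fun_cong[OF gg, of x] by simp
  obtain P2 Q2 M2 where mP2: "mono P2" and mQ2: "mono Q2" and f2PQ: "\<And>x. f2 x = P2 x - Q2 x"
      and bP2: "\<And>x. \<bar>P2 x\<bar> \<le> M2" and bQ2: "\<And>x. \<bar>Q2 x\<bar> \<le> M2"
    using BV_decomp[of f2] f2 unfolding BV0_def by blast
  obtain P Q M where mP: "mono P" and mQ: "mono Q" and gPQ: "\<And>x. g2 x = P x - Q x"
      and bP: "\<And>x. \<bar>P x\<bar> \<le> M" and bQ: "\<And>x. \<bar>Q x\<bar> \<le> M"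
    using BV_decomp[of g2] g2 unfolding BV0_def by blast
  have GPQ: "g2 = (\<lambda>x. P x - Q x)" using gPQ by auto
  have ltop: "(g2 \<longlongrightarrow> 0) at_top" and lbot: "(g2 \<longlongrightarrow> 0) at_bot" using g2 unfolding BV0_def by auto
  note Cfacts = C_lip[OF mP mQ bP bQ GPQ ltop lbot] C_small[OF mP mQ bP bQ GPQ ltop lbot]
    c_improper(1)[OF mP mQ bP bQ GPQ ltop lbot]
  have f1m[measurable]: "f1 \<in> borel_measurable lebesgue" using f1 by (rule borel_measurable_integrable)
  have g1m[measurable]: "g1 \<in> borel_measurable lebesgue" using g1 by (rule borel_measurable_integrable)
  have P2m[measurable]: "P2 \<in> borel_measurable lebesgue" using mP2 by (rule mono_meas)
  have Q2m[measurable]: "Q2 \<in> borel_measurable lebesgue" using mQ2 by (rule mono_meas)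
  have idm[measurable]: "(\<lambda>x::real. x) \<in> borel_measurable lebesgue" by (simp add: measurable_completion)
  have f2b: "\<bar>f2 x\<bar> \<le> 2 * M2" for x using bP2[of x] bQ2[of x] f2PQ[of x] by auto
  define W where "W x = (if \<bar>x\<bar> < 1 then f x else g1 x / x)" for x
  have fexp: "f = (\<lambda>x. f1 x + (P2 x - Q2 x))" using ff f2PQ by auto
  have Wm: "W \<in> borel_measurable lebesgue"
    unfolding W_def fexp by measurable
  have xWm: "(\<lambda>x. x * W x) \<in> borel_measurable lebesgue"
    using Wm by measurable
  define B where "B x = \<bar>f1 x\<bar> + \<bar>g1 x\<bar> + indicat_real {-1..1} x *\<^sub>R (2 * M2)" for x
  have Bint: "integrable lebesgue B" unfolding B_def
    by (intro Bochner_Integration.integrable_add integrable_abs f1 g1 integrable_indicator) auto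
  have fb1: "\<bar>f x\<bar> \<le> B x" if "\<bar>x\<bar> < 1" for x
  proof -
    have "\<bar>f x\<bar> \<le> \<bar>f1 x\<bar> + \<bar>f2 x\<bar>" using ff by simp
    moreover have "indicat_real {-1..1} x = 1" using that by (auto simp: indicator_def)
    ultimately show ?thesis using f2b[of x] unfolding B_def by simp
  qed
  have gb1: "\<bar>g1 x\<bar> \<le> B x" for x
    unfolding B_def using f2b[of 0] by (simp add: indicator_def)
  have Wb: "\<bar>W x\<bar> \<le> B x" for x
  proof (cases "\<bar>x\<bar> < 1")
    case True then show ?thesis using fb1 by (simp add: W_def)
  next
    case False
    then have "\<bar>g1 x / x\<bar> \<le> \<bar>g1 x\<bar>" by (simp add: abs_divide divide_le_eq_1 divide_le_eq)
      (metis abs_ge_zero mult_le_cancel_left1 not_less mult.commute)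
    then show ?thesis using gb1[of x] False by (simp add: W_def)
  qed
  have xWb: "\<bar>x * W x\<bar> \<le> B x" for x
  proof (cases "\<bar>x\<bar> < 1")
    case True
    then have "\<bar>x * f x\<bar> \<le> \<bar>f x\<bar>" by (simp add: abs_mult mult_left_le_one_le)
    then show ?thesis using fb1[OF True] True by (simp add: W_def)
  next
    case False
    then have "x \<noteq> 0" by auto
    then show ?thesis using gb1[of x] False by (simp add: W_def)
  qed
  have Wint: "integrable lebesgue W"
    by (rule Bochner_Integration.integrable_bound[OF Bint Wm]) (use Wb in \<open>auto intro!: AE_I2 order_trans[OF _ abs_ge_self]\<close>)
  have xWint: "integrable lebesgue (\<lambda>x. x * W x)"
    by (rule Bochner_Integration.integrable_bound[OF Bint xWm]) (use xWb in \<open>auto intro!: AE_I2 order_trans[OF _ abs_ge_self]\<close>)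
  define AB where "AB s = (LINT x|lebesgue. sin (s*x) * W x)" for s
  define C where "C s = integral UNIV (cfun g2 s)" for s
  define L1 where "L1 = (LINT x|lebesgue. \<bar>x * W x\<bar>)"
  have L10: "0 \<le> L1" unfolding L1_def by simp
  have ABlip: "\<bar>AB s - AB t\<bar> \<le> \<bar>s - t\<bar> * L1" for s t
    unfolding AB_def L1_def by (rule AB(3)[OF Wint xWint])
  have AB0: "AB 0 = 0" by (simp add: AB_def)
  have decomp: "(\<lambda>x. sin (s*x) * f x) = (\<lambda>x. sin (s*x) * W x + cfun g2 s x)" for s
  proof
    fix x
    show "sin (s*x) * f x = sin (s*x) * W x + cfun g2 s x"
    proof (cases "\<bar>x\<bar> < 1")
      case True then show ?thesis by (simp add: W_def cfun_def)
    next
      case False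
      then have x0: "x \<noteq> 0" by auto
      have fe: "f x = (g1 x + g2 x) / x" using gx[of x] x0 by (simp add: field_simps)
      have "sin (s*x) * W x + cfun g2 s x = sin (s*x) * (g1 x / x) + g2 x * (sin (s*x) / x)"
        using False by (simp add: W_def cfun_def)
      also have "\<dots> = sin (s*x) * ((g1 x + g2 x) / x)" by (simp add: field_simps add_divide_distrib)
      finally show ?thesis unfolding fe by simp
    qed
  qed
  have Ieq: "integral UNIV (\<lambda>x. sin (s*x) * f x) = AB s + C s" for s
  proof -
    have "((\<lambda>x. sin (s*x) * W x + cfun g2 s x) has_integral (AB s + C s)) UNIV"
      unfolding AB_def C_def
      by (intro has_integral_add AB(2)[OF Wint xWint] integrable_integral Cfacts(3))
    then show ?thesis unfolding decomp by (rule integral_unique)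
  qed
  define k where "k = 1 / sqrt (2 * pi)"
  have k0: "0 < k" by (simp add: k_def)
  have Feq: "FS_HK f s = k * (AB s + C s)" for s unfolding FS_HK_def k_def Ieq ..
  show ?thesis
  proof (rule ACG_generic)
    fix \<delta> :: real assume d: "\<delta> > 0"
    show "\<exists>L. \<forall>s t. \<delta> \<le> s \<longrightarrow> \<delta> \<le> t \<longrightarrow> \<bar>FS_HK f s - FS_HK f t\<bar> \<le> L * \<bar>s - t\<bar>"
    proof (intro exI[of _ "k * (L1 + 16 * M / \<delta>)"] allI impI)
      fix s t assume st: "\<delta> \<le> s" "\<delta> \<le> t"
      have c: "\<bar>C s - C t\<bar> \<le> 16 * M / \<delta> * \<bar>s - t\<bar>" unfolding C_def by (rule Cfacts(1)[OF d st])
      have "\<bar>FS_HK f s - FS_HK f t\<bar> = k * \<bar>(AB s - AB t) + (C s - C t)\<bar>"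
      proof -
        have "FS_HK f s - FS_HK f t = k * ((AB s - AB t) + (C s - C t))"
          unfolding Feq by (simp add: algebra_simps)
        then show ?thesis using k0 by (simp add: abs_mult)
      qed
      also have "\<dots> \<le> k * (\<bar>s - t\<bar> * L1 + 16 * M / \<delta> * \<bar>s - t\<bar>)"
        using ABlip[of s t] c k0 by (intro mult_left_mono) auto
      also have "\<dots> = k * (L1 + 16 * M / \<delta>) * \<bar>s - t\<bar>" by (simp add: algebra_simps)
      finally show "\<bar>FS_HK f s - FS_HK f t\<bar> \<le> k * (L1 + 16 * M / \<delta>) * \<bar>s - t\<bar>" .
    qed
  next
    fix s :: real
    have "(\<lambda>x. sin (- s * x) * f x) = (\<lambda>x. - (sin (s * x) * f x))" by auto
    then show "FS_HK f (-s) = - FS_HK f s"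
      unfolding FS_HK_def by (simp only:) (simp add: integral_neg)
  next
    fix e :: real assume e: "e > 0"
    obtain \<eta>1 where \<eta>1: "\<eta>1 > 0" "\<And>s. \<bar>s\<bar> < \<eta>1 \<Longrightarrow> \<bar>C s\<bar> \<le> e / (2 * k)"
      using Cfacts(2)[of "e / (2 * k)"] e k0 unfolding C_def by auto
    define \<eta> where "\<eta> = min \<eta>1 (e / (2 * k * (L1 + 1)))"
    show "\<exists>\<eta>>0. \<forall>s. \<bar>s\<bar> < \<eta> \<longrightarrow> \<bar>FS_HK f s\<bar> \<le> e"
    proof (intro exI[of _ \<eta>] conjI allI impI)
      show "0 < \<eta>" using \<eta>1 e k0 L10 by (simp add: \<eta>_def)
      fix s :: real assume s: "\<bar>s\<bar> < \<eta>"
      have a: "\<bar>AB s\<bar> \<le> \<bar>s\<bar> * L1" using ABlip[of s 0] AB0 by simp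
      have "\<bar>s\<bar> * L1 \<le> (e / (2 * k * (L1 + 1))) * (L1 + 1)"
        using s L10 by (intro mult_mono) (auto simp: \<eta>_def)
      also have "\<dots> = e / (2 * k)"
      proof -
        have "L1 + 1 \<noteq> 0" using L10 by linarith
        then show ?thesis using k0 by (simp add: divide_simps)
      qed
      finally have a2: "\<bar>AB s\<bar> \<le> e / (2 * k)" using a by linarith
      have c: "\<bar>C s\<bar> \<le> e / (2 * k)" using \<eta>1(2)[of s] s by (simp add: \<eta>_def)
      have "\<bar>FS_HK f s\<bar> = k * \<bar>AB s + C s\<bar>" unfolding Feq using k0 by (simp add: abs_mult)
      also have "\<dots> \<le> k * (e / (2 * k) + e / (2 * k))"
        using a2 c k0 by (intro mult_left_mono) auto
      also have "\<dots> = e" using k0 by (simp add: field_simps)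
      finally show "\<bar>FS_HK f s\<bar> \<le> e" .
    qed
  qed
qed

end
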